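(* Let $H\subset\mathrm{PGL}(2,\mathbb{C})=\mathrm{Aut}(\mathbb{P}^1)$ be a finite subgroup and let $\Lambda\subset\mathbb{P}^1$ be a finite subset. The following are equivalent: (1) $\Lambda$ is non-empty and $H$-invariant; (2) there exists an $H$-equivariant morphism $\delta\colon\mathbb{P}^1\to\mathbb{P}^1$ (i.e. $\delta\circ h=h\circ\delta$ for all $h\in H$) such that $\Lambda=\{q\in\mathbb{P}^1\mid\delta(q)=q\}$.
   Context: $\mathrm{PGL}(2,\mathbb{C})$ acts on $\mathbb{P}^1$ in the standard way; morphisms are algebraic. *)

theory Defs
  imports Complex_Main "HOL-Algebra.Group"
begin

text \<open>The complex projective line P^1 is modelled as complex option:
  Some z is the point [z:1], None is the point at infinity [1:0].\<close>
type_synonym P1 = "complex option"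

definition hom_coords :: "P1 \<Rightarrow> complex \<times> complex" where
  "hom_coords p = (case p of Some z \<Rightarrow> (z, 1) | None \<Rightarrow> (1, 0))"

definition proj_pt :: "complex \<times> complex \<Rightarrow> P1" where
  "proj_pt v = (if snd v = 0 then None else Some (fst v / snd v))"

definition hform :: "nat \<Rightarrow> (nat \<Rightarrow> complex) \<Rightarrow> complex \<times> complex \<Rightarrow> complex" where
  "hform d a v = (\<Sum>i\<le>d. a i * fst v ^ i * snd v ^ (d - i))"

text \<open>Algebraic morphisms P^1 \<rightarrow> P^1: given by [x:y] \<mapsto> [F(x,y):G(x,y)]
  with F, G binary forms of the same degree d without common nontrivial zero.\<close>
definition P1_morphism :: "(P1 \<Rightarrow> P1) \<Rightarrow> bool" where
  "P1_morphism \<delta> \<longleftrightarrow> (\<exists>d a b.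
     (\<forall>v. v \<noteq> (0, 0) \<longrightarrow> (hform d a v, hform d b v) \<noteq> (0, 0)) \<and>
     (\<forall>p. \<delta> p = proj_pt (hform d a (hom_coords p), hform d b (hom_coords p))))"

definition moebius :: "complex \<Rightarrow> complex \<Rightarrow> complex \<Rightarrow> complex \<Rightarrow> P1 \<Rightarrow> P1" where
  "moebius a b c d p =
     (let (x, y) = hom_coords p in proj_pt (a * x + b * y, c * x + d * y))"

text \<open>PGL(2,C) = Aut(P^1), realised as its (faithful) action on P^1,
  with group law composition.\<close>
definition PGL2 :: "(P1 \<Rightarrow> P1) monoid" where
  "PGL2 = \<lparr> carrier = {moebius a b c d | a b c d. a * d - b * c \<noteq> 0},
            mult = (\<circ>), one = id \<rparr>"

end

theory Submission imports Defs "HOL-Computational_Algebra.Fundamental_Theorem_Algebra" begin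

definition det2 :: "complex \<times> complex \<Rightarrow> complex \<times> complex \<Rightarrow> complex" where
  "det2 u v = fst u * snd v - snd u * fst v"
definition mv :: "complex \<Rightarrow> complex \<Rightarrow> complex \<Rightarrow> complex \<Rightarrow> complex \<times> complex \<Rightarrow> complex \<times> complex" where
  "mv a b c d u = (a * fst u + b * snd u, c * fst u + d * snd u)"
definition isform :: "nat \<Rightarrow> (complex \<times> complex \<Rightarrow> complex) \<Rightarrow> bool" where
  "isform d f \<longleftrightarrow> (\<exists>a. \<forall>v. f v = hform d a v)"

lemma hc_nz: "hom_coords p \<noteq> (0,0)" by (cases p) (auto simp: hom_coords_def)
lemma proj_hc: "proj_pt (hom_coords p) = p" by (cases p) (auto simp: hom_coords_def proj_pt_def)
lemma hc_proj: "u \<noteq> (0,0) \<Longrightarrow> \<exists>k. k \<noteq> 0 \<and> u = (k * fst (hom_coords (proj_pt u)), k * snd (hom_coords (proj_pt u)))"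
proof (cases "snd u = 0")
  case True assume "u \<noteq> (0,0)"
  then show ?thesis using True by (intro exI[of _ "fst u"]) (auto simp: proj_pt_def hom_coords_def prod_eq_iff)
next
  case False
  then show ?thesis by (intro exI[of _ "snd u"]) (auto simp: proj_pt_def hom_coords_def prod_eq_iff)
qed
lemma proj_scale: "k \<noteq> 0 \<Longrightarrow> proj_pt (k * fst u, k * snd u) = proj_pt u" by (simp add: proj_pt_def)
lemma proj_eq_iff: "u \<noteq> (0,0) \<Longrightarrow> proj_pt u = p \<longleftrightarrow> det2 u (hom_coords p) = 0"
  by (cases p) (auto simp: proj_pt_def hom_coords_def det2_def prod_eq_iff field_simps)
lemma det2_swap: "det2 u v = - det2 v u" by (simp add: det2_def)
lemma det2_self: "det2 u u = 0" by (simp add: det2_def)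
lemma det2_hc_eq: "det2 (hom_coords p) (hom_coords q) = 0 \<longleftrightarrow> p = q"
  using proj_eq_iff[OF hc_nz[of p], of q] by (auto simp: proj_hc det2_self)
lemma det2_zero_proj: "v \<noteq> (0,0) \<Longrightarrow> det2 (hom_coords l) v = 0 \<Longrightarrow> l = proj_pt v"
  using proj_eq_iff[of v l] det2_swap[of v "hom_coords l"] by auto
lemma moeb: "moebius a b c d p = proj_pt (mv a b c d (hom_coords p))"
  by (simp add: moebius_def mv_def split_beta Let_def)
lemma mv_nz: assumes "a*d-b*c\<noteq>0" "u\<noteq>(0,0)" shows "mv a b c d u \<noteq> (0,0)"
proof
  assume h: "mv a b c d u = (0,0)"
  have "(a*d-b*c)*fst u = d*(a * fst u + b * snd u) - b*(c * fst u + d * snd u)" by (simp add: algebra_simps)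
  also have "\<dots> = 0" using h by (simp add: mv_def)
  finally have 1: "fst u = 0" using assms by simp
  have "(a*d-b*c)*snd u = a*(c * fst u + d * snd u) - c*(a * fst u + b * snd u)" by (simp add: algebra_simps)
  also have "\<dots> = 0" using h by (simp add: mv_def)
  finally have "snd u = 0" using assms by simp
  with 1 assms show False by (simp add: prod_eq_iff)
qed
lemma det2_mv: "det2 (mv a b c d u) (mv a b c d v) = (a*d-b*c) * det2 u v"
  by (simp add: det2_def mv_def algebra_simps)
lemma proj_eq_det: assumes "u \<noteq> (0,0)" "u' \<noteq> (0,0)" "proj_pt u = proj_pt u'" shows "det2 u u' = 0"
  using assms by (auto simp: proj_pt_def det2_def prod_eq_iff field_simps split: if_splits)
lemma moeb_inj: assumes "a*d-b*c\<noteq>0" shows "inj (moebius a b c d)"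
proof (rule injI)
  fix p q assume "moebius a b c d p = moebius a b c d q"
  then have "det2 (mv a b c d (hom_coords p)) (mv a b c d (hom_coords q)) = 0"
    by (intro proj_eq_det mv_nz assms hc_nz) (simp_all add: moeb)
  then show "p = q" using assms by (simp add: det2_mv det2_hc_eq)
qed

lemma hform_scale: "hform d a (k*x, k*y) = k^d * hform d a (x,y)"
  unfolding hform_def sum_distrib_left
proof (rule sum.cong)
  fix i assume "i \<in> {..d}"
  then have "k^d = k^i * k^(d-i)" by (simp add: power_add[symmetric])
  then show "a i * fst (k * x, k * y) ^ i * snd (k * x, k * y) ^ (d - i) = k ^ d * (a i * fst (x, y) ^ i * snd (x, y) ^ (d - i))"
    by (simp add: power_mult_distrib)
qed simp

lemma isform_x: assumes "isform d f" shows "isform (Suc d) (\<lambda>v. fst v * f v)"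
proof -
  obtain a where a: "\<And>v. f v = hform d a v" using assms isform_def by auto
  define b where "b i = (if i = 0 then 0 else a (i - 1))" for i
  have "fst v * f v = hform (Suc d) b v" for v
    unfolding a hform_def sum.atMost_Suc_shift by (simp add: b_def sum_distrib_left algebra_simps)
  then show ?thesis unfolding isform_def by blast
qed
lemma isform_y: assumes "isform d f" shows "isform (Suc d) (\<lambda>v. snd v * f v)"
proof -
  obtain a where a: "\<And>v. f v = hform d a v" using assms isform_def by auto
  define b where "b i = (if i \<le> d then a i else 0)" for i
  have "snd v * f v = hform (Suc d) b v" for v
    unfolding a hform_def sum.atMost_Suc sum_distrib_left
    by (auto simp: b_def Suc_diff_le intro!: sum.cong)
  then show ?thesis unfolding isform_def by blast
qed
lemma isform_add: assumes "isform d f" "isform d g" shows "isform d (\<lambda>v. f v + g v)"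
proof -
  obtain a where a: "\<And>v. f v = hform d a v" using assms isform_def by auto
  obtain b where b: "\<And>v. g v = hform d b v" using assms isform_def by auto
  have "f v + g v = hform d (\<lambda>i. a i + b i) v" for v
    unfolding a b hform_def by (simp add: sum.distrib[symmetric] algebra_simps)
  then show ?thesis unfolding isform_def by blast
qed
lemma isform_scale: assumes "isform d f" shows "isform d (\<lambda>v. c * f v)"
proof -
  obtain a where a: "\<And>v. f v = hform d a v" using assms isform_def by auto
  have "c * f v = hform d (\<lambda>i. c * a i) v" for v
    unfolding a hform_def by (simp add: sum_distrib_left algebra_simps)
  then show ?thesis unfolding isform_def by blast
qed
lemma isform_zero: "isform d (\<lambda>v. 0)"
  unfolding isform_def hform_def by (intro exI[of _ "\<lambda>i. 0"]) simp
lemma isform_one: "isform 0 (\<lambda>v. 1)"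
  unfolding isform_def hform_def by (intro exI[of _ "\<lambda>i. 1"]) simp
lemma isform_cong: "isform d f \<Longrightarrow> (\<And>v. g v = f v) \<Longrightarrow> isform d g"
  by (metis ext)
lemma isform_sum: "finite S \<Longrightarrow> (\<And>s. s \<in> S \<Longrightarrow> isform d (f s)) \<Longrightarrow> isform d (\<lambda>v. \<Sum>s\<in>S. f s v)"
  by (induction S rule: finite_induct) (auto intro: isform_zero isform_add)
lemma isform_prod: "finite S \<Longrightarrow> isform (card S) (\<lambda>v. \<Prod>s\<in>S. det2 (g s) v)"
proof (induction S rule: finite_induct)
  case empty then show ?case by (simp add: isform_one)
next
  case (insert s S)
  have "isform (Suc (card S)) (\<lambda>v. fst (g s) * (snd v * (\<Prod>s\<in>S. det2 (g s) v)) + (- snd (g s)) * (fst v * (\<Prod>s\<in>S. det2 (g s) v)))"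
    by (intro isform_add isform_scale isform_x isform_y insert.IH)
  then show ?case using insert by (auto intro!: isform_cong simp: det2_def algebra_simps)
qed

lemma hform_10: "hform m c (1, 0) = c m"
  unfolding hform_def by (subst sum.remove[of _ m]) (auto intro!: sum.neutral)

lemma form_root: "\<exists>v. v \<noteq> (0,0) \<and> hform (Suc d) c v = 0"
proof (cases "c (Suc d) = 0")
  case True then show ?thesis using hform_10[of "Suc d" c] by (intro exI[of _ "(1,0)"]) auto
next
  case False
  define p where "p = (\<Sum>i\<le>Suc d. monom (c i) i)"
  have "coeff p (Suc d) \<noteq> 0" using False unfolding p_def by (subst coeff_sum_monom) auto
  then have "degree p \<noteq> 0" using le_degree by fastforce
  then obtain z where "poly p z = 0" using fundamental_theorem_of_algebra[of p] constant_degree[of p] by metis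
  moreover have "poly p z = hform (Suc d) c (z, 1)"
    by (simp add: p_def poly_sum poly_monom hform_def)
  ultimately show ?thesis by (intro exI[of _ "(z,1)"]) auto
qed


lemma isform_hom: "isform d f \<Longrightarrow> f (k*x, k*y) = k^d * f (x,y)"
  unfolding isform_def using hform_scale by metis

definition PP :: "P1 set \<Rightarrow> P1 \<Rightarrow> complex \<times> complex \<Rightarrow> complex" where
  "PP L l v = (\<Prod>m\<in>L-{l}. det2 (hom_coords m) v)"
definition Phi :: "P1 set \<Rightarrow> complex \<times> complex \<Rightarrow> complex" where
  "Phi L v = (\<Prod>m\<in>L. det2 (hom_coords m) v)"
definition Psi1 :: "P1 set \<Rightarrow> complex \<times> complex \<Rightarrow> complex" where
  "Psi1 L v = (\<Sum>l\<in>L. PP L l v * fst (hom_coords l))"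
definition Psi2 :: "P1 set \<Rightarrow> complex \<times> complex \<Rightarrow> complex" where
  "Psi2 L v = (\<Sum>l\<in>L. PP L l v * snd (hom_coords l))"

lemma PP_Phi: "finite L \<Longrightarrow> l \<in> L \<Longrightarrow> PP L l v * det2 (hom_coords l) v = Phi L v"
  unfolding PP_def Phi_def by (subst (2) prod.remove[of _ l]) auto

lemma psi_det: assumes "finite L"
  shows "Psi1 L v * snd v - Psi2 L v * fst v = of_nat (card L) * Phi L v"
proof -
  have "Psi1 L v * snd v - Psi2 L v * fst v = (\<Sum>l\<in>L. PP L l v * det2 (hom_coords l) v)"
    unfolding Psi1_def Psi2_def det2_def sum_distrib_right sum_subtractf[symmetric]
    by (simp add: algebra_simps)
  also have "\<dots> = (\<Sum>l\<in>L. Phi L v)" using PP_Phi[OF assms] by simp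
  finally show ?thesis by simp
qed

lemma psi_nz: assumes "finite L" "L \<noteq> {}" "v \<noteq> (0,0)"
  shows "(Psi1 L v, Psi2 L v) \<noteq> (0,0)"
proof (cases "Phi L v = 0")
  case False
  have "card L \<noteq> 0" using assms by simp
  then show ?thesis using psi_det[OF assms(1), of v] False by auto
next
  case True
  then obtain k where k: "k \<in> L" "det2 (hom_coords k) v = 0" using assms(1) by (auto simp: Phi_def)
  have z: "PP L l v = 0" if "l \<in> L" "l \<noteq> k" for l
    unfolding PP_def using k that assms(1) by (auto intro!: prod_zero)
  have nz: "PP L k v \<noteq> 0"
  proof -
    have "\<forall>m\<in>L-{k}. det2 (hom_coords m) v \<noteq> 0" using det2_zero_proj[OF assms(3)] k by (metis Diff_iff singletonI)
    then show ?thesis unfolding PP_def using assms(1) by auto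
  qed
  have "Psi1 L v = PP L k v * fst (hom_coords k)" "Psi2 L v = PP L k v * snd (hom_coords k)"
    unfolding Psi1_def Psi2_def using assms(1) k z
    by (subst sum.remove[of _ k]; auto intro!: sum.neutral)+
  then show ?thesis using nz hc_nz[of k] by (auto simp: prod_eq_iff)
qed

lemma psi_form: assumes "finite L"
  shows "isform (card L - 1) (Psi1 L)" "isform (card L - 1) (Psi2 L)"
proof -
  have P: "isform (card L - 1) (PP L l)" if "l \<in> L" for l
  proof -
    have "isform (card (L - {l})) (PP L l)" unfolding PP_def
      using isform_prod[of "L-{l}" hom_coords] assms by (simp add: fun_eq_iff)
    then show ?thesis using that assms by simp
  qed
  show "isform (card L - 1) (Psi1 L)" unfolding Psi1_def
  proof (rule isform_sum[OF assms])
    fix l assume "l \<in> L"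
    show "isform (card L - 1) (\<lambda>v. PP L l v * fst (hom_coords l))"
      using isform_scale[OF P[OF \<open>l \<in> L\<close>], of "fst (hom_coords l)"] by (simp add: mult.commute)
  qed
  show "isform (card L - 1) (Psi2 L)" unfolding Psi2_def
  proof (rule isform_sum[OF assms])
    fix l assume "l \<in> L"
    show "isform (card L - 1) (\<lambda>v. PP L l v * snd (hom_coords l))"
      using isform_scale[OF P[OF \<open>l \<in> L\<close>], of "snd (hom_coords l)"] by (simp add: mult.commute)
  qed
qed

lemma mv_scale: "mv a b c d (k * x, k * y) = (k * fst (mv a b c d (x,y)), k * snd (mv a b c d (x,y)))"
  by (simp add: mv_def algebra_simps)

lemma psi_equiv:
  assumes L: "finite L" and D: "a*d-b*c \<noteq> 0" and hL: "moebius a b c d ` L = L"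
  shows "\<exists>C. C \<noteq> 0 \<and> (\<forall>v. Psi1 L (mv a b c d v) = C * fst (mv a b c d (Psi1 L v, Psi2 L v))
                        \<and> Psi2 L (mv a b c d v) = C * snd (mv a b c d (Psi1 L v, Psi2 L v)))"
proof -
  define h where "h = moebius a b c d"
  define M where "M = mv a b c d"
  define Dt where "Dt = a*d-b*c"
  have inj: "inj_on h L" using moeb_inj[OF D] unfolding h_def by (metis inj_on_subset subset_UNIV)
  have "\<forall>l\<in>L. \<exists>k. k \<noteq> 0 \<and> hom_coords (h l) = (k * fst (M (hom_coords l)), k * snd (M (hom_coords l)))"
  proof
    fix l assume "l \<in> L"
    have nz: "M (hom_coords l) \<noteq> (0,0)" unfolding M_def by (rule mv_nz[OF D hc_nz])
    obtain k where k: "k \<noteq> 0" "M (hom_coords l) = (k * fst (hom_coords (proj_pt (M (hom_coords l)))), k * snd (hom_coords (proj_pt (M (hom_coords l)))))"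
      using hc_proj[OF nz] by blast
    have "h l = proj_pt (M (hom_coords l))" unfolding h_def M_def by (simp add: moeb)
    then show "\<exists>k. k \<noteq> 0 \<and> hom_coords (h l) = (k * fst (M (hom_coords l)), k * snd (M (hom_coords l)))"
      using k by (intro exI[of _ "1/k"]) (auto simp: prod_eq_iff)
  qed
  then obtain k where k: "\<And>l. l \<in> L \<Longrightarrow> k l \<noteq> 0"
    "\<And>l. l \<in> L \<Longrightarrow> hom_coords (h l) = (k l * fst (M (hom_coords l)), k l * snd (M (hom_coords l)))"
    by metis
  have ell: "det2 (hom_coords (h l)) (M v) = k l * Dt * det2 (hom_coords l) v" if "l \<in> L" for l v
  proof -
    have "det2 (hom_coords (h l)) (M v) = k l * det2 (M (hom_coords l)) (M v)"
      using k(2)[OF that] by (simp add: det2_def algebra_simps)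
    then show ?thesis unfolding M_def Dt_def det2_mv by simp
  qed
  define K where "K = (\<Prod>m\<in>L. k m * Dt)"
  have PPeq: "PP L (h l) (M v) = (\<Prod>m\<in>L-{l}. k m * Dt) * PP L l v" if "l \<in> L" for l v
  proof -
    have im: "h ` (L - {l}) = L - {h l}"
      using inj_on_image_set_diff[OF inj, of L "{l}"] hL that unfolding h_def by auto
    have inj2: "inj_on h (L - {l})" using inj by (rule inj_on_subset) auto
    have "PP L (h l) (M v) = (\<Prod>m\<in>L-{l}. det2 (hom_coords (h m)) (M v))"
      unfolding PP_def im[symmetric] prod.reindex[OF inj2] by simp
    also have "\<dots> = (\<Prod>m\<in>L-{l}. (k m * Dt) * det2 (hom_coords m) v)"
      by (rule prod.cong) (auto simp: ell)
    finally show ?thesis by (simp add: prod.distrib PP_def)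
  qed
  have KD: "(\<Prod>m\<in>L-{l}. k m * Dt) * k l = K / Dt" if "l \<in> L" for l
    unfolding K_def using that L D Dt_def by (subst prod.remove[of _ l]) auto
  have term1: "PP L (h l) (M v) * fst (hom_coords (h l)) = (K/Dt) * (PP L l v * fst (M (hom_coords l)))"
    and term2: "PP L (h l) (M v) * snd (hom_coords (h l)) = (K/Dt) * (PP L l v * snd (M (hom_coords l)))"
    if "l \<in> L" for l v
    using PPeq[OF that, of v] k(2)[OF that] KD[OF that, symmetric] by (simp_all add: algebra_simps)
  have Knz: "K / Dt \<noteq> 0" using k(1) D L unfolding K_def Dt_def by auto
  have sumre: "(\<Sum>l\<in>L. g l) = (\<Sum>l\<in>L. g (h l))" for g :: "P1 \<Rightarrow> complex"
    using sum.reindex[OF inj, of g] hL unfolding h_def by simp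
  show ?thesis
  proof (intro exI[of _ "K/Dt"] conjI allI Knz)
    fix v
    have "Psi1 L (M v) = (\<Sum>l\<in>L. (K/Dt) * (PP L l v * fst (M (hom_coords l))))"
      unfolding Psi1_def by (subst sumre) (simp add: term1)
    also have "\<dots> = (K/Dt) * fst (M (Psi1 L v, Psi2 L v))"
      by (simp add: M_def mv_def Psi1_def Psi2_def sum_distrib_left sum.distrib algebra_simps)
    finally show "Psi1 L (mv a b c d v) = K / Dt * fst (mv a b c d (Psi1 L v, Psi2 L v))" unfolding M_def .
    have "Psi2 L (M v) = (\<Sum>l\<in>L. (K/Dt) * (PP L l v * snd (M (hom_coords l))))"
      unfolding Psi2_def by (subst sumre) (simp add: term2)
    also have "\<dots> = (K/Dt) * snd (M (Psi1 L v, Psi2 L v))"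
      by (simp add: M_def mv_def Psi1_def Psi2_def sum_distrib_left sum.distrib algebra_simps)
    finally show "Psi2 L (mv a b c d v) = K / Dt * snd (mv a b c d (Psi1 L v, Psi2 L v))" unfolding M_def .
  qed
qed

lemma carrier_moeb: "h \<in> carrier PGL2 \<Longrightarrow> \<exists>a b c d. h = moebius a b c d \<and> a*d-b*c \<noteq> 0"
  by (auto simp: PGL2_def)

theorem mainTheorem12:
  fixes H :: "(P1 \<Rightarrow> P1) set" and \<Lambda> :: "P1 set"
  assumes "subgroup H PGL2" and "finite H" and "finite \<Lambda>"
  shows "(\<Lambda> \<noteq> {} \<and> (\<forall>h\<in>H. h ` \<Lambda> = \<Lambda>)) \<longleftrightarrow>
         (\<exists>\<delta>. P1_morphism \<delta> \<and> (\<forall>h\<in>H. \<delta> \<circ> h = h \<circ> \<delta>) \<and> \<Lambda> = {q. \<delta> q = q})"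
proof
  have Hc: "\<And>h. h \<in> H \<Longrightarrow> \<exists>a b c d. h = moebius a b c d \<and> a*d-b*c \<noteq> 0"
    using subgroup.subset[OF assms(1)] carrier_moeb by blast
  assume A: "\<Lambda> \<noteq> {} \<and> (\<forall>h\<in>H. h ` \<Lambda> = \<Lambda>)"
  define L where "L = \<Lambda>"
  have L: "finite L" "L \<noteq> {}" using A assms(3) L_def by auto
  define d where "d = card L - 1"
  define \<delta> where "\<delta> p = proj_pt (Psi1 L (hom_coords p), Psi2 L (hom_coords p))" for p
  obtain fa where fa: "\<And>v. Psi1 L v = hform d fa v" using psi_form(1)[OF L(1)] unfolding isform_def d_def by blast
  obtain fb where fb: "\<And>v. Psi2 L v = hform d fb v" using psi_form(2)[OF L(1)] unfolding isform_def d_def by blast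
  have hom: "Psi1 L (k*x, k*y) = k^d * Psi1 L (x,y)" "Psi2 L (k*x, k*y) = k^d * Psi2 L (x,y)" for k x y
    using isform_hom[OF psi_form(1)[OF L(1)]] isform_hom[OF psi_form(2)[OF L(1)]] d_def by auto
  have nzw: "(Psi1 L (hom_coords p), Psi2 L (hom_coords p)) \<noteq> (0,0)" for p
    using psi_nz[OF L hc_nz] .
  have morph: "P1_morphism \<delta>"
    unfolding P1_morphism_def
    by (rule exI[of _ d], rule exI[of _ fa], rule exI[of _ fb])
       (use psi_nz[OF L] in \<open>auto simp: \<delta>_def fa[symmetric] fb[symmetric]\<close>)
  have equiv: "\<delta> \<circ> h = h \<circ> \<delta>" if hH: "h \<in> H" for h
  proof
    fix p
    obtain a b c dd where h: "h = moebius a b c dd" and D: "a*dd-b*c \<noteq> 0" using Hc[OF hH] by blast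
    have hL: "moebius a b c dd ` L = L" using A hH h L_def by auto
    obtain C where C: "C \<noteq> 0" "\<And>v. Psi1 L (mv a b c dd v) = C * fst (mv a b c dd (Psi1 L v, Psi2 L v))"
      "\<And>v. Psi2 L (mv a b c dd v) = C * snd (mv a b c dd (Psi1 L v, Psi2 L v))"
      using psi_equiv[OF L(1) D hL] by blast
    define u where "u = mv a b c dd (hom_coords p)"
    have unz: "u \<noteq> (0,0)" unfolding u_def by (rule mv_nz[OF D hc_nz])
    obtain k where k: "k \<noteq> 0" "u = (k * fst (hom_coords (proj_pt u)), k * snd (hom_coords (proj_pt u)))"
      using hc_proj[OF unz] by blast
    have hp: "h p = proj_pt u" unfolding h u_def by (simp add: moeb)
    have "\<delta> (h p) = proj_pt (k^d * Psi1 L (hom_coords (h p)), k^d * Psi2 L (hom_coords (h p)))"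
      unfolding \<delta>_def using k(1) proj_scale[of "k^d" "(Psi1 L (hom_coords (h p)), Psi2 L (hom_coords (h p)))"] by simp
    also have "\<dots> = proj_pt (Psi1 L u, Psi2 L u)"
      using hom[of k "fst (hom_coords (h p))" "snd (hom_coords (h p))"] k(2) hp by (metis prod.collapse)
    also have "\<dots> = proj_pt (mv a b c dd (Psi1 L (hom_coords p), Psi2 L (hom_coords p)))"
      unfolding u_def C(2,3) using C(1) by (simp add: proj_scale)
    finally have 1: "\<delta> (h p) = proj_pt (mv a b c dd (Psi1 L (hom_coords p), Psi2 L (hom_coords p)))" .
    define w where "w = (Psi1 L (hom_coords p), Psi2 L (hom_coords p))"
    obtain k' where k': "k' \<noteq> 0" "w = (k' * fst (hom_coords (proj_pt w)), k' * snd (hom_coords (proj_pt w)))"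
      using hc_proj[OF nzw[of p, folded w_def]] by blast
    have "h (\<delta> p) = proj_pt (mv a b c dd (hom_coords (proj_pt w)))"
      unfolding h \<delta>_def w_def[symmetric] by (simp add: moeb)
    also have "\<dots> = proj_pt (mv a b c dd w)"
      by (subst k'(2), subst mv_scale, simp add: proj_scale k'(1))
    finally show "(\<delta> \<circ> h) p = (h \<circ> \<delta>) p" using 1 w_def by simp
  qed
  have fixq: "\<delta> q = q \<longleftrightarrow> q \<in> L" for q
  proof -
    define w where "w = hom_coords q"
    have "\<delta> q = q \<longleftrightarrow> det2 (Psi1 L w, Psi2 L w) w = 0"
      unfolding \<delta>_def w_def by (rule proj_eq_iff[OF nzw])
    also have "\<dots> \<longleftrightarrow> of_nat (card L) * Phi L w = 0"
      using psi_det[OF L(1), of w] by (simp add: det2_def)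
    also have "\<dots> \<longleftrightarrow> Phi L w = 0" using L by simp
    also have "\<dots> \<longleftrightarrow> (\<exists>m\<in>L. m = q)" unfolding Phi_def w_def using L(1) by (simp add: det2_hc_eq)
    finally show ?thesis by simp
  qed
  show "\<exists>\<delta>. P1_morphism \<delta> \<and> (\<forall>h\<in>H. \<delta> \<circ> h = h \<circ> \<delta>) \<and> \<Lambda> = {q. \<delta> q = q}"
    using morph equiv fixq L_def by (intro exI[of _ \<delta>]) auto
next
  have Hc: "\<And>h. h \<in> H \<Longrightarrow> \<exists>a b c d. h = moebius a b c d \<and> a*d-b*c \<noteq> 0"
    using subgroup.subset[OF assms(1)] carrier_moeb by blast
  assume "\<exists>\<delta>. P1_morphism \<delta> \<and> (\<forall>h\<in>H. \<delta> \<circ> h = h \<circ> \<delta>) \<and> \<Lambda> = {q. \<delta> q = q}"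
  then obtain \<delta> where mo: "P1_morphism \<delta>" and eq: "\<forall>h\<in>H. \<delta> \<circ> h = h \<circ> \<delta>" and Ld: "\<Lambda> = {q. \<delta> q = q}"
    by blast
  obtain d fa fb where nz: "\<And>v. v \<noteq> (0,0) \<Longrightarrow> (hform d fa v, hform d fb v) \<noteq> (0,0)"
    and dl: "\<And>p. \<delta> p = proj_pt (hform d fa (hom_coords p), hform d fb (hom_coords p))"
    using mo unfolding P1_morphism_def by blast
  have fF: "isform (Suc d) (\<lambda>v. snd v * hform d fa v + (-1) * (fst v * hform d fb v))"
    by (intro isform_add isform_scale isform_x isform_y) (auto simp: isform_def)
  then obtain c where c: "\<And>v. snd v * hform d fa v + (-1) * (fst v * hform d fb v) = hform (Suc d) c v"
    unfolding isform_def by blast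
  have fixiff: "\<delta> q = q \<longleftrightarrow> hform (Suc d) c (hom_coords q) = 0" for q
    unfolding dl c[symmetric] by (subst proj_eq_iff[OF nz[OF hc_nz]]) (simp add: det2_def algebra_simps)
  obtain v where v: "v \<noteq> (0,0)" "hform (Suc d) c v = 0" using form_root by blast
  obtain k where k: "k \<noteq> 0" "v = (k * fst (hom_coords (proj_pt v)), k * snd (hom_coords (proj_pt v)))"
    using hc_proj[OF v(1)] by blast
  have "k^Suc d * hform (Suc d) c (hom_coords (proj_pt v)) = 0"
    using v(2) k(2) hform_scale[of "Suc d" c k] by (metis prod.collapse)
  then have "proj_pt v \<in> \<Lambda>" using k(1) Ld fixiff by simp
  then have ne: "\<Lambda> \<noteq> {}" by blast
  have inv: "h ` \<Lambda> = \<Lambda>" if hH: "h \<in> H" for h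
  proof -
    obtain a b cc dd where h: "h = moebius a b cc dd" and D: "a*dd-b*cc \<noteq> 0" using Hc[OF hH] by blast
    have inj: "inj_on h \<Lambda>" using moeb_inj[OF D] h by (metis inj_on_subset subset_UNIV)
    have sub: "h ` \<Lambda> \<subseteq> \<Lambda>"
    proof
      fix x assume "x \<in> h ` \<Lambda>"
      then obtain q where q: "q \<in> \<Lambda>" "x = h q" by blast
      have "\<delta> (h q) = h (\<delta> q)" using eq hH by (metis comp_apply)
      then show "x \<in> \<Lambda>" using q Ld by simp
    qed
    show ?thesis using card_subset_eq[OF assms(3) sub] card_image[OF inj] by simp
  qed
  show "\<Lambda> \<noteq> {} \<and> (\<forall>h\<in>H. h ` \<Lambda> = \<Lambda>)" using ne inv by blast
qed

end
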